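(* Consider $$u_i'=\mu\sum_{j=1}^nL_{ij}u_j+u_i(p_i-u_i-v_i),\qquad v_i'=\mu\sum_{j=1}^nL_{ij}v_j+v_i(q_i-u_i-v_i),\qquad i=1,\dots,n,$$ with $\mu>0$, $p,q\gg0$, and assume (A2)–(A3). Let $\Omega_u=\{i:p_i>q_i\}$ and $\Omega_v=\{i:p_i<q_i\}$, and suppose both are nonempty and $\Omega_u\cup\Omega_v=\{1,\dots,n\}$. Define $u_0,v_0\in\mathbb R^n$ by $u_{0i}=p_i$, $v_{0i}=0$ for $i\in\Omega_u$ and $u_{0i}=0$, $v_{0i}=q_i$ for $i\in\Omega_v$. For $\mu>0$ small, let $(u,v)=(u(\mu),v(\mu))$ be the unique positive equilibrium of the system. Then $\lim_{\mu\to0^+}(u(\mu),v(\mu))=(u_0,v_0)$.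
   Context: Let $n\ge2$ and $A=(a_{ij})_{n\times n}$ with $a_{ij}\ge0$ for $i\ne j$. The connection matrix $L$ has $L_{ij}=a_{ij}$ for $i\ne j$, $L_{ii}=-\sum_{k\ne i}a_{ki}$. The weighted digraph $\mathcal G$ associated with $A$ has vertices $\{1,\dots,n\}$ and, for $i\ne j$, an arc $(i,j)$ iff $a_{ji}>0$, with weight $a_{ji}$. A cycle is a list of distinct vertices $i_1,\dots,i_k$, $k\ge2$, with arcs $(i_m,i_{m+1})$, $m<k$, and $(i_k,i_1)$; its weight is the product of its arc weights; its reverse has all arcs reversed. $\mathcal G$ is cycle-balanced if for every cycle its reverse is also a cycle of $\mathcal G$ with the same weight. (A2): $L$ is irreducible. (A3): $\mathcal G$ is cycle-balanced. Under these hypotheses (since $p\not\ge q$ and $q\not\ge p$) the system has, for all sufficiently small $\mu>0$, a unique positive equilibrium. *)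

theory Defs
  imports "HOL-Analysis.Analysis"
begin

definition conn_matrix :: "real^'n^'n \<Rightarrow> real^'n^'n" where
  "conn_matrix A = (\<chi> i j. if i = j then - (\<Sum>k\<in>UNIV - {i}. A $ k $ i) else A $ i $ j)"

text \<open>Irreducible square matrix: there is no nonempty proper index set S with
  M_ij = 0 for all i in S and j not in S (i.e. M is not permutation-similar to a
  block triangular matrix).\<close>
definition irreducible_mat :: "real^'n^'n \<Rightarrow> bool" where
  "irreducible_mat M \<longleftrightarrow>
     \<not> (\<exists>S::'n set. S \<noteq> {} \<and> S \<noteq> UNIV \<and> (\<forall>i\<in>S. \<forall>j\<in>UNIV - S. M $ i $ j = 0))"

definition arc :: "real^'n^'n \<Rightarrow> 'n \<Rightarrow> 'n \<Rightarrow> bool" where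
  "arc A i j \<longleftrightarrow> i \<noteq> j \<and> A $ j $ i > 0"

definition is_cycle :: "real^'n^'n \<Rightarrow> 'n list \<Rightarrow> bool" where
  "is_cycle A cs \<longleftrightarrow> length cs \<ge> 2 \<and> distinct cs \<and>
     (\<forall>m < length cs. arc A (cs ! m) (cs ! ((m + 1) mod length cs)))"

definition cycle_weight :: "real^'n^'n \<Rightarrow> 'n list \<Rightarrow> real" where
  "cycle_weight A cs = (\<Prod>m < length cs. A $ (cs ! ((m + 1) mod length cs)) $ (cs ! m))"

definition cycle_balanced :: "real^'n^'n \<Rightarrow> bool" where
  "cycle_balanced A \<longleftrightarrow> (\<forall>cs. is_cycle A cs \<longrightarrow>
     is_cycle A (rev cs) \<and> cycle_weight A (rev cs) = cycle_weight A cs)"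

definition pos_equilibrium ::
  "real^'n^'n \<Rightarrow> real^'n \<Rightarrow> real^'n \<Rightarrow> real \<Rightarrow> real^'n \<Rightarrow> real^'n \<Rightarrow> bool" where
  "pos_equilibrium L p q \<mu> u v \<longleftrightarrow>
     (\<forall>i. u $ i > 0 \<and> v $ i > 0) \<and>
     (\<forall>i. \<mu> * (\<Sum>j\<in>UNIV. L $ i $ j * u $ j) + u $ i * (p $ i - u $ i - v $ i) = 0) \<and>
     (\<forall>i. \<mu> * (\<Sum>j\<in>UNIV. L $ i $ j * v $ j) + v $ i * (q $ i - u $ i - v $ i) = 0)"

end

theory Submission
  imports Defs
begin

lemma site:
  fixes \<mu> u v p q d C \<alpha> \<beta> :: real
  assumes mu: "\<mu> > 0" and u: "u > 0" and v: "v > 0" and pq: "q < p" and q: "0 < q"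
    and hu: "u * (p-(u+v)) = \<mu> * \<alpha>" and hv: "v * (q-(u+v)) = \<mu> * \<beta>"
    and ha: "\<alpha> \<le> d * u"
    and aC: "\<bar>\<alpha>\<bar> \<le> C" and bC: "\<bar>\<beta>\<bar> \<le> C"
    and s1: "\<mu> * d \<le> (p-q)/2" and s2: "\<mu> * (d + 2 * C/(p-q)) \<le> p/2"
  shows "\<bar>v\<bar> \<le> \<mu> * (2 * C/(p-q)) \<and> \<bar>u-p\<bar> \<le> \<mu> * (2 * C/p + 2 * C/(p-q))"
proof -
  define s where "s = u+v"
  have "\<mu> * \<alpha> \<le> \<mu> * (d * u)" using ha mu by (simp add: mult_left_mono)
  hence "u * (p-s) \<le> u * (\<mu> * d)" using hu unfolding s_def by (simp add: ac_simps)
  hence hd: "p - s \<le> \<mu> * d" using u by simp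
  have "p - s \<le> (p-q)/2" using hd s1 by linarith
  hence sq: "s - q \<ge> (p-q)/2" by (simp add: field_simps)
  have "\<bar>v\<bar> * ((p-q)/2) \<le> \<bar>v\<bar> * (s-q)" using sq by (intro mult_left_mono) auto
  also have "\<dots> = \<bar>v * (q-s)\<bar>" using sq pq by (simp add: abs_mult)
  also have "\<dots> = \<mu> * \<bar>\<beta>\<bar>" using hv mu unfolding s_def by (simp add: abs_mult)
  also have "\<dots> \<le> \<mu> * C" using bC mu by simp
  finally have "\<bar>v\<bar> * ((p-q)/2) \<le> \<mu> * C" .
  hence vb: "\<bar>v\<bar> \<le> \<mu> * (2 * C/(p-q))" using pq by (simp add: field_simps)
  have e: "\<mu> * (d + 2 * C/(p-q)) = \<mu> * d + \<mu> * (2 * C/(p-q))" by (simp add: algebra_simps)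
  have ul: "u \<ge> p/2" using vb hd s2 v unfolding s_def e by linarith
  have "\<bar>p-s\<bar> * (p/2) \<le> \<bar>p-s\<bar> * u" using ul by (intro mult_left_mono) auto
  also have "\<dots> = \<bar>u * (p-s)\<bar>" using u by (simp add: abs_mult)
  also have "\<dots> = \<mu> * \<bar>\<alpha>\<bar>" using hu mu unfolding s_def by (simp add: abs_mult)
  also have "\<dots> \<le> \<mu> * C" using aC mu by simp
  finally have "\<bar>p-s\<bar> * (p/2) \<le> \<mu> * C" .
  hence sb: "\<bar>p-s\<bar> \<le> \<mu> * (2 * C/p)" using pq q by (simp add: field_simps)
  have "\<bar>u-p\<bar> \<le> \<bar>p-s\<bar> + \<bar>v\<bar>" unfolding s_def by simp
  thus ?thesis using vb sb by (simp add: algebra_simps)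
qed

lemma col_sum: "(\<Sum>i\<in>UNIV. conn_matrix A $ i $ j) = 0"
proof -
  have "(\<Sum>i\<in>UNIV. conn_matrix A $ i $ j) = conn_matrix A $ j $ j + (\<Sum>i\<in>UNIV-{j}. conn_matrix A $ i $ j)"
    by (simp add: sum.remove)
  also have "(\<Sum>i\<in>UNIV-{j}. conn_matrix A $ i $ j) = (\<Sum>i\<in>UNIV-{j}. A $ i $ j)"
    by (intro sum.cong) (auto simp: conn_matrix_def)
  finally show ?thesis by (simp add: conn_matrix_def)
qed

lemma sum_Lu: "(\<Sum>i\<in>UNIV. \<Sum>j\<in>UNIV. conn_matrix A $ i $ j * u $ j) = 0"
proof -
  have "(\<Sum>i\<in>UNIV. \<Sum>j\<in>UNIV. conn_matrix A $ i $ j * u $ j)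
      = (\<Sum>j\<in>UNIV. \<Sum>i\<in>UNIV. conn_matrix A $ i $ j * u $ j)" by (rule sum.swap)
  also have "\<dots> = (\<Sum>j\<in>UNIV. (\<Sum>i\<in>UNIV. conn_matrix A $ i $ j) * u $ j)"
    by (simp add: sum_distrib_right)
  finally show ?thesis by (simp add: col_sum)
qed

lemma row_lb:
  assumes A_nonneg: "\<forall>i j. i \<noteq> j \<longrightarrow> A $ i $ j \<ge> 0" and u: "\<forall>j. u $ j \<ge> 0"
  shows "(\<Sum>j\<in>UNIV. conn_matrix A $ i $ j * u $ j) \<ge> - (\<Sum>k\<in>UNIV-{i}. A $ k $ i) * u $ i"
proof -
  have "(\<Sum>j\<in>UNIV. conn_matrix A $ i $ j * u $ j) = conn_matrix A $ i $ i * u $ i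
      + (\<Sum>j\<in>UNIV-{i}. conn_matrix A $ i $ j * u $ j)"
    by (simp add: sum.remove)
  moreover have "(\<Sum>j\<in>UNIV-{i}. conn_matrix A $ i $ j * u $ j) \<ge> 0"
    using A_nonneg u by (intro sum_nonneg) (auto simp: conn_matrix_def)
  ultimately show ?thesis by (simp add: conn_matrix_def)
qed

lemma row_abs:
  assumes "\<forall>j. \<bar>u $ j\<bar> \<le> B"
  shows "\<bar>\<Sum>j\<in>UNIV. M $ i $ j * u $ j\<bar> \<le> (\<Sum>j\<in>UNIV. \<bar>M $ i $ j\<bar>) * (B::real)"
proof -
  have "\<bar>\<Sum>j\<in>UNIV. M $ i $ j * u $ j\<bar> \<le> (\<Sum>j\<in>UNIV. \<bar>M $ i $ j * u $ j\<bar>)" by (rule sum_abs)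
  also have "\<dots> \<le> (\<Sum>j\<in>UNIV. \<bar>M $ i $ j\<bar> * B)"
    using assms by (intro sum_mono) (simp add: abs_mult mult_left_mono)
  finally show ?thesis by (simp add: sum_distrib_right)
qed

lemma sq_le: fixes x c :: real assumes "x^2 \<le> c" shows "x \<le> c + 1"
proof (rule ccontr)
  assume "\<not> x \<le> c + 1"
  hence h: "x > c + 1" by simp
  have "c \<ge> 0" using assms by (smt (verit) zero_le_power2)
  hence "x > 1" using h by simp
  hence "x * x > x * 1" by simp
  hence "x^2 > c" using h by (simp add: power2_eq_square)
  thus False using assms by simp
qed

lemma ubound:
  fixes u v p :: "real^'n"
  assumes u: "\<forall>j. u $ j > 0" and v: "\<forall>j. v $ j > 0" and p: "\<forall>j. p $ j > 0"
    and s: "(\<Sum>j\<in>UNIV. u $ j * (p $ j - u $ j - v $ j)) = 0"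
  shows "u $ i \<le> (\<Sum>j\<in>UNIV. p $ j) + (\<Sum>j\<in>UNIV. (p $ j)^2) + 1"
proof -
  have "(\<Sum>j\<in>UNIV. (u $ j - p $ j / 2)^2) \<le> (\<Sum>j\<in>UNIV. - (u $ j * (p $ j - u $ j - v $ j)) + (p $ j)^2/4)"
  proof (intro sum_mono)
    fix j
    have "u $ j * v $ j > 0" using u v by simp
    thus "(u $ j - p $ j / 2)^2 \<le> - (u $ j * (p $ j - u $ j - v $ j)) + (p $ j)^2/4"
      by (simp add: power2_eq_square algebra_simps)
  qed
  also have "\<dots> = - (\<Sum>j\<in>UNIV. u $ j * (p $ j - u $ j - v $ j)) + (\<Sum>j\<in>UNIV. (p $ j)^2) / 4"
    by (simp only: sum.distrib sum_negf sum_divide_distrib)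
  also have "\<dots> = (\<Sum>j\<in>UNIV. (p $ j)^2) / 4" using s by simp
  finally have a: "(\<Sum>j\<in>UNIV. (u $ j - p $ j / 2)^2) \<le> (\<Sum>j\<in>UNIV. (p $ j)^2) / 4" .
  have "(u $ i - p $ i / 2)^2 \<le> (\<Sum>j\<in>UNIV. (u $ j - p $ j / 2)^2)"
    by (rule member_le_sum) auto
  hence "u $ i - p $ i / 2 \<le> (\<Sum>j\<in>UNIV. (p $ j)^2) / 4 + 1" using a sq_le by force
  moreover have "p $ i \<le> (\<Sum>j\<in>UNIV. p $ j)" using p by (intro member_le_sum) (auto intro: less_imp_le)
  moreover have "(\<Sum>j\<in>UNIV. (p $ j)^2) \<ge> 0" by (intro sum_nonneg) auto
  ultimately show ?thesis using p[rule_format, of i] by linarith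
qed

lemma equil_swap:
  "pos_equilibrium L p q \<mu> u v \<Longrightarrow> pos_equilibrium L q p \<mu> v u"
  unfolding pos_equilibrium_def by (simp add: algebra_simps)

lemma pt:
  fixes A :: "real^'n^'n" and p q uu vv :: "real^'n"
  assumes A_nonneg: "\<forall>i j. i \<noteq> j \<longrightarrow> A $ i $ j \<ge> 0"
    and p_pos: "\<forall>i. p $ i > 0" and q_pos: "\<forall>i. q $ i > 0"
    and eq: "pos_equilibrium (conn_matrix A) p q \<mu> uu vv" and mu: "\<mu> > 0"
    and pq: "q $ i < p $ i"
    and Bp: "(\<Sum>j\<in>UNIV. p $ j) + (\<Sum>j\<in>UNIV. (p $ j)^2) + 1 \<le> B"
    and Bq: "(\<Sum>j\<in>UNIV. q $ j) + (\<Sum>j\<in>UNIV. (q $ j)^2) + 1 \<le> B"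
    and s1: "\<mu> * (\<Sum>k\<in>UNIV-{i}. A $ k $ i) \<le> (p $ i - q $ i)/2"
    and s2: "\<mu> * ((\<Sum>k\<in>UNIV-{i}. A $ k $ i) + 2 * ((\<Sum>j\<in>UNIV. \<bar>conn_matrix A $ i $ j\<bar>) * B)/(p $ i - q $ i)) \<le> p $ i/2"
  shows "\<bar>vv $ i\<bar> \<le> \<mu> * (2 * ((\<Sum>j\<in>UNIV. \<bar>conn_matrix A $ i $ j\<bar>) * B)/(p $ i - q $ i))
     \<and> \<bar>uu $ i - p $ i\<bar> \<le> \<mu> * (2 * ((\<Sum>j\<in>UNIV. \<bar>conn_matrix A $ i $ j\<bar>) * B)/p $ i
          + 2 * ((\<Sum>j\<in>UNIV. \<bar>conn_matrix A $ i $ j\<bar>) * B)/(p $ i - q $ i))"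
proof -
  let ?L = "conn_matrix A"
  have pos: "\<forall>j. uu $ j > 0 \<and> vv $ j > 0"
    and equ: "\<forall>j. \<mu> * (\<Sum>k\<in>UNIV. ?L $ j $ k * uu $ k) + uu $ j * (p $ j - uu $ j - vv $ j) = 0"
    and eqv: "\<forall>j. \<mu> * (\<Sum>k\<in>UNIV. ?L $ j $ k * vv $ k) + vv $ j * (q $ j - uu $ j - vv $ j) = 0"
    using eq unfolding pos_equilibrium_def by auto
  have su: "(\<Sum>j\<in>UNIV. uu $ j * (p $ j - uu $ j - vv $ j)) = 0"
  proof -
    have "0 = (\<Sum>j\<in>UNIV. \<mu> * (\<Sum>k\<in>UNIV. ?L $ j $ k * uu $ k) + uu $ j * (p $ j - uu $ j - vv $ j))"
      using equ by simp
    also have "\<dots> = \<mu> * (\<Sum>j\<in>UNIV. \<Sum>k\<in>UNIV. ?L $ j $ k * uu $ k) + (\<Sum>j\<in>UNIV. uu $ j * (p $ j - uu $ j - vv $ j))"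
      by (simp add: sum.distrib sum_distrib_left)
    finally show ?thesis by (simp add: sum_Lu)
  qed
  have sv: "(\<Sum>j\<in>UNIV. vv $ j * (q $ j - vv $ j - uu $ j)) = 0"
  proof -
    have "0 = (\<Sum>j\<in>UNIV. \<mu> * (\<Sum>k\<in>UNIV. ?L $ j $ k * vv $ k) + vv $ j * (q $ j - uu $ j - vv $ j))"
      using eqv by simp
    also have "\<dots> = \<mu> * (\<Sum>j\<in>UNIV. \<Sum>k\<in>UNIV. ?L $ j $ k * vv $ k) + (\<Sum>j\<in>UNIV. vv $ j * (q $ j - uu $ j - vv $ j))"
      by (simp add: sum.distrib sum_distrib_left)
    finally have "(\<Sum>j\<in>UNIV. vv $ j * (q $ j - uu $ j - vv $ j)) = 0" by (simp add: sum_Lu)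
    moreover have "(\<Sum>j\<in>UNIV. vv $ j * (q $ j - vv $ j - uu $ j)) = (\<Sum>j\<in>UNIV. vv $ j * (q $ j - uu $ j - vv $ j))"
      by (intro sum.cong) (auto simp: algebra_simps)
    ultimately show ?thesis by simp
  qed
  have bu: "\<forall>j. \<bar>uu $ j\<bar> \<le> B"
  proof
    fix j
    have "uu $ j \<le> (\<Sum>j\<in>UNIV. p $ j) + (\<Sum>j\<in>UNIV. (p $ j)^2) + 1"
      by (rule ubound) (use pos p_pos su in auto)
    moreover have "uu $ j > 0" using pos by simp
    ultimately show "\<bar>uu $ j\<bar> \<le> B" using Bp by linarith
  qed
  have bv: "\<forall>j. \<bar>vv $ j\<bar> \<le> B"
  proof
    fix j
    have "vv $ j \<le> (\<Sum>j\<in>UNIV. q $ j) + (\<Sum>j\<in>UNIV. (q $ j)^2) + 1"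
      by (rule ubound) (use pos q_pos sv in auto)
    moreover have "vv $ j > 0" using pos by simp
    ultimately show "\<bar>vv $ j\<bar> \<le> B" using Bq by linarith
  qed
  define \<alpha> where "\<alpha> = - (\<Sum>k\<in>UNIV. ?L $ i $ k * uu $ k)"
  define \<beta> where "\<beta> = - (\<Sum>k\<in>UNIV. ?L $ i $ k * vv $ k)"
  have hu: "uu $ i * (p $ i - (uu $ i + vv $ i)) = \<mu> * \<alpha>"
    using equ[rule_format, of i] unfolding \<alpha>_def by (simp add: algebra_simps)
  have hv: "vv $ i * (q $ i - (uu $ i + vv $ i)) = \<mu> * \<beta>"
    using eqv[rule_format, of i] unfolding \<beta>_def by (simp add: algebra_simps)
  have ha: "\<alpha> \<le> (\<Sum>k\<in>UNIV-{i}. A $ k $ i) * uu $ i"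
  proof -
    have "\<forall>j. uu $ j \<ge> 0" using pos by (auto intro: less_imp_le)
    from row_lb[OF A_nonneg this, of i] show ?thesis unfolding \<alpha>_def by linarith
  qed
  have aC: "\<bar>\<alpha>\<bar> \<le> (\<Sum>j\<in>UNIV. \<bar>?L $ i $ j\<bar>) * B"
    using row_abs[OF bu] unfolding \<alpha>_def by simp
  have bC: "\<bar>\<beta>\<bar> \<le> (\<Sum>j\<in>UNIV. \<bar>?L $ i $ j\<bar>) * B"
    using row_abs[OF bv] unfolding \<beta>_def by simp
  show ?thesis
  proof (rule site[OF mu _ _ pq _ hu hv ha aC bC s1 s2])
    show "0 < uu $ i" using pos by blast
    show "0 < vv $ i" using pos by blast
    show "0 < q $ i" using q_pos by blast
  qed
qed

lemma tend_from_bound: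
  fixes f :: "real \<Rightarrow> real"
  assumes "eventually (\<lambda>\<mu>. \<bar>f \<mu> - a\<bar> \<le> \<mu> * K) (at_right 0)"
  shows "(f \<longlongrightarrow> a) (at_right 0)"
proof -
  have g: "((\<lambda>\<mu>. \<mu> * K) \<longlongrightarrow> 0 * K) (at_right (0::real))"
    by (intro tendsto_intros)
  have "((\<lambda>\<mu>. f \<mu> - a) \<longlongrightarrow> 0) (at_right 0)"
  proof (rule Lim_null_comparison)
    show "\<forall>\<^sub>F x in at_right 0. norm (f x - a) \<le> x * K" using assms by simp
    show "((\<lambda>\<mu>. \<mu> * K) \<longlongrightarrow> 0) (at_right 0)" using g by simp
  qed
  thus ?thesis by (simp add: LIM_zero_iff)
qed

lemma small_ev:
  fixes c e :: real assumes "e > 0"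
  shows "eventually (\<lambda>\<mu>. \<mu> * c \<le> e) (at_right 0)"
proof -
  have "((\<lambda>\<mu>. \<mu> * c) \<longlongrightarrow> 0 * c) (at_right (0::real))"
    by (intro tendsto_intros)
  hence "eventually (\<lambda>\<mu>. \<mu> * c < e) (at_right 0)"
    using assms by (intro order_tendstoD(2)) auto
  thus ?thesis by (rule eventually_mono) simp
qed

theorem theorem4p5:
  fixes A :: "real^'n^'n" and p q :: "real^'n"
    and u v :: "real \<Rightarrow> real^'n"
  assumes n2: "CARD('n) \<ge> 2"
    and A_nonneg: "\<forall>i j. i \<noteq> j \<longrightarrow> A $ i $ j \<ge> 0"
    and p_pos: "\<forall>i. p $ i > 0" and q_pos: "\<forall>i. q $ i > 0"
    and A2: "irreducible_mat (conn_matrix A)"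
    and A3: "cycle_balanced A"
    and Omega_u_ne: "\<exists>i. p $ i > q $ i"
    and Omega_v_ne: "\<exists>i. p $ i < q $ i"
    and Omega_cover: "\<forall>i. p $ i > q $ i \<or> p $ i < q $ i"
    and equil: "eventually (\<lambda>\<mu>. pos_equilibrium (conn_matrix A) p q \<mu> (u \<mu>) (v \<mu>)) (at_right 0)"
  shows "((\<lambda>\<mu>. (u \<mu>, v \<mu>)) \<longlongrightarrow>
           ((\<chi> i. if p $ i > q $ i then p $ i else 0), (\<chi> i. if p $ i < q $ i then q $ i else 0)))
         (at_right 0)"
proof -
  define B where "B = ((\<Sum>j\<in>UNIV. p $ j) + (\<Sum>j\<in>UNIV. (p $ j)^2) + 1)
     + ((\<Sum>j\<in>UNIV. q $ j) + (\<Sum>j\<in>UNIV. (q $ j)^2) + 1)"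
  have sp: "(\<Sum>j\<in>UNIV. p $ j) + (\<Sum>j\<in>UNIV. (p $ j)^2) + 1 \<ge> 0"
    using p_pos by (intro add_nonneg_nonneg sum_nonneg) (auto intro: less_imp_le)
  have sq: "(\<Sum>j\<in>UNIV. q $ j) + (\<Sum>j\<in>UNIV. (q $ j)^2) + 1 \<ge> 0"
    using q_pos by (intro add_nonneg_nonneg sum_nonneg) (auto intro: less_imp_le)
  have Bp: "(\<Sum>j\<in>UNIV. p $ j) + (\<Sum>j\<in>UNIV. (p $ j)^2) + 1 \<le> B" using sq unfolding B_def by linarith
  have Bq: "(\<Sum>j\<in>UNIV. q $ j) + (\<Sum>j\<in>UNIV. (q $ j)^2) + 1 \<le> B" using sp unfolding B_def by linarith
  have evpos: "eventually (\<lambda>\<mu>. \<mu> > 0) (at_right (0::real))" by (rule eventually_at_right_less)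
  have equil': "eventually (\<lambda>\<mu>. pos_equilibrium (conn_matrix A) q p \<mu> (v \<mu>) (u \<mu>)) (at_right 0)"
    using equil by (rule eventually_mono) (rule equil_swap)
  have coord: "((\<lambda>\<mu>. u \<mu> $ i) \<longlongrightarrow> (if p $ i > q $ i then p $ i else 0)) (at_right 0)
     \<and> ((\<lambda>\<mu>. v \<mu> $ i) \<longlongrightarrow> (if p $ i < q $ i then q $ i else 0)) (at_right 0)" for i
  proof (cases "p $ i > q $ i")
    case True
    let ?d = "\<Sum>k\<in>UNIV-{i}. A $ k $ i"
    let ?C = "(\<Sum>j\<in>UNIV. \<bar>conn_matrix A $ i $ j\<bar>) * B"
    have e1: "eventually (\<lambda>\<mu>. \<mu> * ?d \<le> (p $ i - q $ i)/2) (at_right 0)"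
      by (rule small_ev) (use True in simp)
    have e2: "eventually (\<lambda>\<mu>. \<mu> * (?d + 2 * ?C/(p $ i - q $ i)) \<le> p $ i/2) (at_right 0)"
      by (rule small_ev) (use p_pos in simp)
    have ev: "eventually (\<lambda>\<mu>. \<bar>v \<mu> $ i\<bar> \<le> \<mu> * (2 * ?C/(p $ i - q $ i))
       \<and> \<bar>u \<mu> $ i - p $ i\<bar> \<le> \<mu> * (2 * ?C/p $ i + 2 * ?C/(p $ i - q $ i))) (at_right 0)"
      using equil evpos e1 e2
    proof eventually_elim
      case (elim \<mu>)
      show ?case by (rule pt[OF A_nonneg p_pos q_pos elim(1) elim(2) True Bp Bq elim(3) elim(4)])
    qed
    have "((\<lambda>\<mu>. u \<mu> $ i) \<longlongrightarrow> p $ i) (at_right 0)"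
      by (rule tend_from_bound[where K="2 * ?C/p $ i + 2 * ?C/(p $ i - q $ i)"]) (use ev in \<open>rule eventually_mono\<close>, simp)
    moreover have "((\<lambda>\<mu>. v \<mu> $ i) \<longlongrightarrow> 0) (at_right 0)"
      by (rule tend_from_bound[where K="2 * ?C/(p $ i - q $ i)"]) (use ev in \<open>rule eventually_mono\<close>, simp)
    ultimately show ?thesis using True by simp
  next
    case False
    hence F: "p $ i < q $ i" using Omega_cover by auto
    let ?d = "\<Sum>k\<in>UNIV-{i}. A $ k $ i"
    let ?C = "(\<Sum>j\<in>UNIV. \<bar>conn_matrix A $ i $ j\<bar>) * B"
    have e1: "eventually (\<lambda>\<mu>. \<mu> * ?d \<le> (q $ i - p $ i)/2) (at_right 0)"
      by (rule small_ev) (use F in simp)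
    have e2: "eventually (\<lambda>\<mu>. \<mu> * (?d + 2 * ?C/(q $ i - p $ i)) \<le> q $ i/2) (at_right 0)"
      by (rule small_ev) (use q_pos in simp)
    have ev: "eventually (\<lambda>\<mu>. \<bar>u \<mu> $ i\<bar> \<le> \<mu> * (2 * ?C/(q $ i - p $ i))
       \<and> \<bar>v \<mu> $ i - q $ i\<bar> \<le> \<mu> * (2 * ?C/q $ i + 2 * ?C/(q $ i - p $ i))) (at_right 0)"
      using equil' evpos e1 e2
    proof eventually_elim
      case (elim \<mu>)
      show ?case by (rule pt[OF A_nonneg q_pos p_pos elim(1) elim(2) F Bq Bp elim(3) elim(4)])
    qed
    have "((\<lambda>\<mu>. v \<mu> $ i) \<longlongrightarrow> q $ i) (at_right 0)"
      by (rule tend_from_bound[where K="2 * ?C/q $ i + 2 * ?C/(q $ i - p $ i)"]) (use ev in \<open>rule eventually_mono\<close>, simp)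
    moreover have "((\<lambda>\<mu>. u \<mu> $ i) \<longlongrightarrow> 0) (at_right 0)"
      by (rule tend_from_bound[where K="2 * ?C/(q $ i - p $ i)"]) (use ev in \<open>rule eventually_mono\<close>, simp)
    ultimately show ?thesis using F by simp
  qed
  have tu: "(u \<longlongrightarrow> (\<chi> i. if p $ i > q $ i then p $ i else 0)) (at_right 0)"
    by (rule vec_tendstoI) (use coord in simp)
  have tv: "(v \<longlongrightarrow> (\<chi> i. if p $ i < q $ i then q $ i else 0)) (at_right 0)"
    by (rule vec_tendstoI) (use coord in simp)
  show ?thesis by (rule tendsto_Pair[OF tu tv])
qed

end
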